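(* For all $m\ge1$, $\bar\delta_{2m,1}=\frac{m}{2(2m-1)}$ and $\bar\delta_{2m+1,1}=\frac{m+1}{2(2m+1)}$.
   Context: For integers $\lambda\ge0$, $d\ge1$, write $\lambda=\sum_{i=1}^d\binom{k_i}{i}$ uniquely with $k_d>\cdots>k_1\ge0$ and set $\lambda^{[d]}=\sum_{i=1}^d\binom{k_i}{i+1}$. For $n>d$ and $0\le\lambda\le\binom nd$ let $\delta_{n,d}(\lambda)=\lambda/\binom nd-\lambda^{[d]}/\binom n{d+1}$, and let $\bar\delta_{n,d}=\max_{0\le\lambda\le\binom nd}\delta_{n,d}(\lambda)$ (the paper denotes this maximum simply by $\delta_{n,d}$ in this part). *)

theory Defs
  imports Complex_Main
begin

text \<open>d-cascade (Macaulay) representation: lam = sum_{i=1}^d (k_i choose i)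
  with k_d > ... > k_1 >= 0.  The sequence k is normalised to be 0 outside {1..d}
  so that it is unique.\<close>
definition cascade_rep :: "nat \<Rightarrow> nat \<Rightarrow> (nat \<Rightarrow> nat) \<Rightarrow> bool" where
  "cascade_rep d lam k \<longleftrightarrow>
     (\<forall>i. 1 \<le> i \<and> i < d \<longrightarrow> k i < k (Suc i)) \<and>
     (\<forall>i. i \<notin> {1..d} \<longrightarrow> k i = 0) \<and>
     lam = (\<Sum>i=1..d. k i choose i)"

definition cascade_seq :: "nat \<Rightarrow> nat \<Rightarrow> (nat \<Rightarrow> nat)" where
  "cascade_seq d lam = (THE k. cascade_rep d lam k)"

definition upper_shadow :: "nat \<Rightarrow> nat \<Rightarrow> nat" where
  "upper_shadow d lam = (\<Sum>i=1..d. cascade_seq d lam i choose (i + 1))"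

definition delta :: "nat \<Rightarrow> nat \<Rightarrow> nat \<Rightarrow> real" where
  "delta n d lam = real lam / real (n choose d) - real (upper_shadow d lam) / real (n choose (d + 1))"

definition delta_bar :: "nat \<Rightarrow> nat \<Rightarrow> real" where
  "delta_bar n d = Max (delta n d ` {0..n choose d})"

end

theory Submission
  imports Defs
begin

lemma cs1: "cascade_seq 1 lam = (\<lambda>i. if i = 1 then lam else 0)"
proof -
  have r: "cascade_rep 1 lam (\<lambda>i. if i = 1 then lam else 0)"
    unfolding cascade_rep_def by auto
  have u: "k = (\<lambda>i. if i = 1 then lam else 0)" if "cascade_rep 1 lam k" for k
  proof
    fix i show "k i = (if i = 1 then lam else 0)"
      using that unfolding cascade_rep_def by auto
  qed
  show ?thesis unfolding cascade_seq_def using r u by (rule the_equality)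
qed

lemma us1: "upper_shadow 1 lam = lam choose 2"
  unfolding upper_shadow_def cs1 by (simp add: numeral_2_eq_2)

lemma ch2: "real (n choose 2) = real n * (real n - 1) / 2"
proof -
  have "even (n * (n - 1))" by (cases "even n") auto
  then have "real (n * (n - 1) div 2) = real (n * (n-1)) / 2"
    by (simp add: real_of_nat_div)
  then show ?thesis by (cases n) (simp_all add: choose_two algebra_simps)
qed

lemma delta1:
  assumes "n \<ge> 2"
  shows "delta n 1 lam = real lam * (real n - real lam) / (real n * (real n - 1))"
proof -
  have n2: "real n - 1 > 0" using assms by simp
  have a: "real (n choose (1+1)) = real n * (real n - 1) / 2" by (simp only: one_add_one ch2)
  have b: "real (lam choose 2) = real lam * (real lam - 1) / 2" by (rule ch2)
  have "delta n 1 lam = real lam / real n - (real lam * (real lam - 1) / 2) / (real n * (real n - 1) / 2)"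
    unfolding delta_def us1 a b by simp
  also have "\<dots> = real lam * (real n - real lam) / (real n * (real n - 1))"
    using assms n2 by (simp add: field_simps)
  finally show ?thesis .
qed

lemma maxlem:
  assumes "n \<ge> 2" and "a \<le> n" and "\<And>l. l \<le> n \<Longrightarrow> real l * (real n - real l) \<le> real a * (real n - real a)"
  shows "delta_bar n 1 = real a * (real n - real a) / (real n * (real n - 1))"
proof -
  have pos: "real n * (real n - 1) > 0" using assms(1) by simp
  show ?thesis unfolding delta_bar_def
  proof (rule Max_eqI)
    show "finite (delta n 1 ` {0..n choose 1})" by simp
    show "y \<le> real a * (real n - real a) / (real n * (real n - 1))"
      if "y \<in> delta n 1 ` {0..n choose 1}" for y
    proof -
      from that obtain x where x0: "x \<in> {0..n choose 1}" and x2: "y = delta n 1 x" by (rule imageE)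
      have x: "x \<le> n" "y = delta n 1 x" using x0 x2 by auto
      show ?thesis unfolding x(2) delta1[OF assms(1)]
        using assms(3)[OF x(1)] pos by (intro divide_right_mono) auto
    qed
    show "real a * (real n - real a) / (real n * (real n - 1)) \<in> delta n 1 ` {0..n choose 1}"
    proof (rule image_eqI[where x=a])
      show "real a * (real n - real a) / (real n * (real n - 1)) = delta n 1 a"
        by (rule delta1[OF assms(1), symmetric])
      show "a \<in> {0..n choose 1}" using assms(2) by simp
    qed
  qed
qed

theorem proposition6p1:
  fixes m :: nat
  assumes "m \<ge> 1"
  shows "delta_bar (2*m) 1 = real m / (2 * (2 * real m - 1))
    \<and> delta_bar (2*m+1) 1 = real (m+1) / (2 * (2 * real m + 1))"
proof
  have "delta_bar (2*m) 1 = real m * (real (2*m) - real m) / (real (2*m) * (real (2*m) - 1))"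
  proof (rule maxlem)
    fix l assume "l \<le> 2*m"
    have "0 \<le> (real m - real l)^2" by simp
    then show "real l * (real (2 * m) - real l) \<le> real m * (real (2 * m) - real m)"
      by (simp add: power2_eq_square algebra_simps)
  qed (use assms in auto)
  also have "\<dots> = real m / (2 * (2 * real m - 1))" using assms
    by (simp add: field_simps power2_eq_square)
  finally show "delta_bar (2*m) 1 = real m / (2 * (2 * real m - 1))" .
next
  have "delta_bar (2*m+1) 1 = real m * (real (2*m+1) - real m) / (real (2*m+1) * (real (2*m+1) - 1))"
  proof (rule maxlem)
    fix l assume "l \<le> 2*m+1"
    have "0 \<le> (real l - real m) * (real l - real m - 1)"
    proof (cases "l \<le> m")
      case True then show ?thesis by (intro mult_nonpos_nonpos) auto
    next
      case False then have "real l \<ge> real m + 1" by simp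
      then show ?thesis by (intro mult_nonneg_nonneg) auto
    qed
    then show "real l * (real (2 * m + 1) - real l) \<le> real m * (real (2 * m + 1) - real m)"
      by (simp add: algebra_simps)
  qed (use assms in auto)
  also have "\<dots> = real (m+1) / (2 * (2 * real m + 1))"
  proof -
    have "real m > 0" using assms by simp
    have e1: "real (2*m+1) - real m = real m + 1" by simp
    have e2: "real (2*m+1) - 1 = 2 * real m" by simp
    have "real m * (real m + 1) / (real (2*m+1) * (2 * real m)) = real (m+1) / (2 * (2 * real m + 1))"
    proof -
      have d1: "real (2*m+1) * (2 * real m) \<noteq> 0" using \<open>real m > 0\<close> by simp
      have d2: "2 * (2 * real m + 1) \<noteq> 0" by (simp add: add_pos_pos)
      show ?thesis unfolding frac_eq_eq[OF d1 d2] by (simp add: algebra_simps)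
    qed
    then show ?thesis unfolding e1 e2 .
  qed
  finally show "delta_bar (2*m+1) 1 = real (m+1) / (2 * (2 * real m + 1))" .
qed

end
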